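(* Let $n\ge1$, $a\in\mathcal{IS}_n$, and consider the semigroup $(\mathcal{IS}_n,*_a)$. Let $x\in\mathcal{IS}_n$. If $\operatorname{ran}(x)\subseteq\operatorname{dom}(a)$ and $\operatorname{dom}(x)\subseteq\operatorname{ran}(a)$, then the $\mathcal{H}$-class of $x$ is $$H_x=\{y\in\mathcal{IS}_n : \operatorname{dom}(y)=\operatorname{dom}(x),\ \operatorname{ran}(y)=\operatorname{ran}(x)\};$$ otherwise $H_x=\{x\}$.
   Context: $\mathcal{IS}_n$ is the set of all partial injective maps of $N=\{1,\dots,n\}$, including the empty map; $\operatorname{dom}(x)$, $\operatorname{ran}(x)$ denote domain and range. Maps are composed from left to right: $(xy)(i)=y(x(i))$, defined exactly when $i\in\operatorname{dom}(x)$ and $x(i)\in\operatorname{dom}(y)$. For fixed $a\in\mathcal{IS}_n$, $x*_a y:=xay$. Green's relations in a semigroup $S$: with $S^1$ the semigroup $S$ with an identity adjoined, $x\mathcal{L}y$ iff $S^1x=S^1y$, $x\mathcal{R}y$ iff $xS^1=yS^1$, $\mathcal{H}=\mathcal{L}\cap\mathcal{R}$, $\mathcal{D}=\mathcal{L}\circ\mathcal{R}$ (which equals $\mathcal{R}\circ\mathcal{L}$). $L_x,R_x,H_x,D_x$ denote the corresponding classes of $x$, here computed in $(\mathcal{IS}_n,*_a)$. *)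

theory Defs
  imports Main
begin

text \<open>Partial maps of N = {1..n} are represented as maps nat \<rightharpoonup> nat.
  A partial injective map of N is a map whose domain and range lie in {1..n}
  and which is injective on its domain.\<close>

definition IS :: "nat \<Rightarrow> (nat \<rightharpoonup> nat) set" where
  "IS n = {x. dom x \<subseteq> {1..n} \<and> ran x \<subseteq> {1..n} \<and> inj_on x (dom x)}"

text \<open>Left-to-right composition: (x ;; y) i = y (x i).\<close>
definition pcomp :: "(nat \<rightharpoonup> nat) \<Rightarrow> (nat \<rightharpoonup> nat) \<Rightarrow> (nat \<rightharpoonup> nat)" (infixl ";;" 70) where
  "x ;; y = y \<circ>\<^sub>m x"

definition sand :: "(nat \<rightharpoonup> nat) \<Rightarrow> (nat \<rightharpoonup> nat) \<Rightarrow> (nat \<rightharpoonup> nat) \<Rightarrow> (nat \<rightharpoonup> nat)" where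
  "sand a x y = x ;; a ;; y"

text \<open>Principal ideals in the semigroup (IS n, *_a) with identity adjoined:
  S^1 x = S x \<union> {x}, x S^1 = x S \<union> {x}.\<close>
definition left_ideal1 :: "nat \<Rightarrow> (nat \<rightharpoonup> nat) \<Rightarrow> (nat \<rightharpoonup> nat) \<Rightarrow> (nat \<rightharpoonup> nat) set" where
  "left_ideal1 n a x = {sand a s x | s. s \<in> IS n} \<union> {x}"

definition right_ideal1 :: "nat \<Rightarrow> (nat \<rightharpoonup> nat) \<Rightarrow> (nat \<rightharpoonup> nat) \<Rightarrow> (nat \<rightharpoonup> nat) set" where
  "right_ideal1 n a x = {sand a x s | s. s \<in> IS n} \<union> {x}"

definition GreenL :: "nat \<Rightarrow> (nat \<rightharpoonup> nat) \<Rightarrow> (nat \<rightharpoonup> nat) \<Rightarrow> (nat \<rightharpoonup> nat) \<Rightarrow> bool" where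
  "GreenL n a x y \<longleftrightarrow> left_ideal1 n a x = left_ideal1 n a y"

definition GreenR :: "nat \<Rightarrow> (nat \<rightharpoonup> nat) \<Rightarrow> (nat \<rightharpoonup> nat) \<Rightarrow> (nat \<rightharpoonup> nat) \<Rightarrow> bool" where
  "GreenR n a x y \<longleftrightarrow> right_ideal1 n a x = right_ideal1 n a y"

definition GreenH :: "nat \<Rightarrow> (nat \<rightharpoonup> nat) \<Rightarrow> (nat \<rightharpoonup> nat) \<Rightarrow> (nat \<rightharpoonup> nat) \<Rightarrow> bool" where
  "GreenH n a x y \<longleftrightarrow> GreenL n a x y \<and> GreenR n a x y"

definition Hclass :: "nat \<Rightarrow> (nat \<rightharpoonup> nat) \<Rightarrow> (nat \<rightharpoonup> nat) \<Rightarrow> (nat \<rightharpoonup> nat) set" where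
  "Hclass n a x = {y \<in> IS n. GreenH n a x y}"

end

theory Submission
  imports Defs
begin

definition minv :: "(nat \<rightharpoonup> nat) \<Rightarrow> (nat \<rightharpoonup> nat)" where
  "minv f j = (if j \<in> ran f then Some (THE i. f i = Some j) else None)"

lemma minv_eq:
  assumes "inj_on f (dom f)" "f i = Some j"
  shows "minv f j = Some i"
proof -
  have "j \<in> ran f" using assms(2) by (auto simp: ran_def)
  moreover have "(THE i. f i = Some j) = i"
    by (rule the_equality, rule assms(2)) (metis assms domI inj_on_def)
  ultimately show ?thesis by (simp add: minv_def)
qed

lemma minv_Some:
  assumes inj: "inj_on f (dom f)" and m: "minv f j = Some i"
  shows "f i = Some j"
proof -
  have "j \<in> ran f" using m by (auto simp: minv_def split: if_splits)
  then obtain k where k: "f k = Some j" by (auto simp: ran_def)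
  then have "minv f j = Some k" by (rule minv_eq[OF inj])
  then show ?thesis using m k by simp
qed

lemma ran_mc: "ran (f \<circ>\<^sub>m g) \<subseteq> ran f"
  by (auto simp: ran_def map_comp_def split: option.splits)

lemma mc_assoc: "(f \<circ>\<^sub>m g) \<circ>\<^sub>m h = f \<circ>\<^sub>m (g \<circ>\<^sub>m h)"
  by (rule ext) (simp add: map_comp_def split: option.split)

lemma minv_dom: "minv f j \<noteq> None \<Longrightarrow> j \<in> ran f"
  by (auto simp: minv_def split: if_splits)

lemma IS_pcomp:
  assumes x: "x \<in> IS n" and y: "y \<in> IS n"
  shows "x ;; y \<in> IS n"
  unfolding IS_def
proof (intro CollectI conjI)
  show "dom (x ;; y) \<subseteq> {1..n}"
  proof
    fix i assume "i \<in> dom (x ;; y)"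
    then have "i \<in> dom x" by (auto simp: pcomp_def map_comp_def split: option.splits)
    then show "i \<in> {1..n}" using x by (auto simp: IS_def)
  qed
  show "ran (x ;; y) \<subseteq> {1..n}"
  proof
    fix v assume "v \<in> ran (x ;; y)"
    then have "v \<in> ran y" by (auto simp: pcomp_def ran_def map_comp_def split: option.splits)
    then show "v \<in> {1..n}" using y by (auto simp: IS_def)
  qed
  have ix: "inj_on x (dom x)" and iy: "inj_on y (dom y)" using x y by (auto simp: IS_def)
  show "inj_on (x ;; y) (dom (x ;; y))"
  proof (rule inj_onI)
    fix i1 i2 assume "i1 \<in> dom (x ;; y)" "i2 \<in> dom (x ;; y)" and eq: "(x ;; y) i1 = (x ;; y) i2"
    then obtain u1 u2 v1 v2 where m1: "x i1 = Some u1" "y u1 = Some v1"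
      and m2: "x i2 = Some u2" "y u2 = Some v2"
      by (auto simp: pcomp_def map_comp_def split: option.splits)
    have "v1 = v2" using eq m1 m2 by (simp add: pcomp_def)
    then have "u1 = u2" using iy m1 m2 by (metis domI inj_on_def)
    then show "i1 = i2" using ix m1 m2 by (metis domI inj_on_def)
  qed
qed

lemma exists_right:
  assumes f: "f \<in> IS n" and g: "g \<in> IS n" and sub: "dom g \<subseteq> dom f"
  shows "\<exists>s\<in>IS n. g = f ;; s"
proof (intro bexI)
  let ?s = "g \<circ>\<^sub>m minv f"
  have injf: "inj_on f (dom f)" and injg: "inj_on g (dom g)" using f g by (auto simp: IS_def)
  show "g = f ;; ?s"
  proof
    fix i
    show "g i = (f ;; ?s) i"
    proof (cases "f i")
      case None
      then have "g i = None" using sub by auto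
      then show ?thesis using None by (simp add: pcomp_def)
    next
      case (Some j)
      then show ?thesis using minv_eq[OF injf Some] by (simp add: pcomp_def)
    qed
  qed
  show "?s \<in> IS n"
    unfolding IS_def
  proof (intro CollectI conjI)
    show "dom ?s \<subseteq> {1..n}"
    proof
      fix j assume "j \<in> dom ?s"
      then have "minv f j \<noteq> None" by (auto simp: map_comp_def split: option.splits)
      then have "j \<in> ran f" by (rule minv_dom)
      then show "j \<in> {1..n}" using f by (auto simp: IS_def)
    qed
    show "ran ?s \<subseteq> {1..n}"
    proof
      fix v assume "v \<in> ran ?s"
      then have "v \<in> ran g" by (auto simp: ran_def map_comp_def split: option.splits)
      then show "v \<in> {1..n}" using g by (auto simp: IS_def)
    qed
    show "inj_on ?s (dom ?s)"
    proof (rule inj_onI)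
      fix j1 j2 assume "j1 \<in> dom ?s" "j2 \<in> dom ?s" and eq: "?s j1 = ?s j2"
      then obtain i1 i2 v1 v2 where m1: "minv f j1 = Some i1" "g i1 = Some v1"
        and m2: "minv f j2 = Some i2" "g i2 = Some v2"
        by (auto simp: map_comp_def split: option.splits)
      have "v1 = v2" using eq m1 m2 by simp
      then have "i1 = i2" using injg m1 m2 by (metis domI inj_on_def)
      then show "j1 = j2" using minv_Some[OF injf m1(1)] minv_Some[OF injf m2(1)] by simp
    qed
  qed
qed

lemma exists_left:
  assumes f: "f \<in> IS n" and g: "g \<in> IS n" and sub: "ran g \<subseteq> ran f"
  shows "\<exists>s\<in>IS n. g = s ;; f"
proof (intro bexI)
  let ?s = "minv f \<circ>\<^sub>m g"
  have injf: "inj_on f (dom f)" and injg: "inj_on g (dom g)" using f g by (auto simp: IS_def)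
  show "g = ?s ;; f"
  proof
    fix i
    show "g i = (?s ;; f) i"
    proof (cases "g i")
      case None
      then show ?thesis by (simp add: pcomp_def)
    next
      case (Some j)
      then have "j \<in> ran f" using sub by (auto simp: ran_def)
      then obtain k where "f k = Some j" by (auto simp: ran_def)
      then show ?thesis using minv_eq[OF injf] Some by (simp add: pcomp_def)
    qed
  qed
  show "?s \<in> IS n"
    unfolding IS_def
  proof (intro CollectI conjI)
    show "dom ?s \<subseteq> {1..n}"
    proof
      fix j assume "j \<in> dom ?s"
      then have "j \<in> dom g" by (auto simp: map_comp_def split: option.splits)
      then show "j \<in> {1..n}" using g by (auto simp: IS_def)
    qed
    show "ran ?s \<subseteq> {1..n}"
    proof
      fix v assume "v \<in> ran ?s"
      then obtain j where "minv f j = Some v" by (auto simp: ran_def map_comp_def split: option.splits)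
      then have "v \<in> dom f" using minv_Some[OF injf] by blast
      then show "v \<in> {1..n}" using f by (auto simp: IS_def)
    qed
    show "inj_on ?s (dom ?s)"
    proof (rule inj_onI)
      fix i1 i2 assume "i1 \<in> dom ?s" "i2 \<in> dom ?s" and eq: "?s i1 = ?s i2"
      then obtain j1 j2 k1 k2 where m1: "g i1 = Some j1" "minv f j1 = Some k1"
        and m2: "g i2 = Some j2" "minv f j2 = Some k2"
        by (auto simp: map_comp_def split: option.splits)
      have "k1 = k2" using eq m1 m2 by simp
      then have "j1 = j2" using minv_Some[OF injf m1(2)] minv_Some[OF injf m2(2)] by simp
      then show "i1 = i2" using injg m1 m2 by (metis domI inj_on_def)
    qed
  qed
qed

lemma right_ideal_char:
  assumes a: "a \<in> IS n" and x: "x \<in> IS n"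
  shows "right_ideal1 n a x = {z \<in> IS n. dom z \<subseteq> dom (x ;; a)} \<union> {x}"
proof -
  have xa: "x ;; a \<in> IS n" using IS_pcomp[OF x a] .
  have "{sand a x s | s. s \<in> IS n} = {z \<in> IS n. dom z \<subseteq> dom (x ;; a)}"
  proof (intro equalityI subsetI)
    fix z assume "z \<in> {sand a x s | s. s \<in> IS n}"
    then obtain s where s: "s \<in> IS n" "z = x ;; a ;; s" by (auto simp: sand_def)
    then show "z \<in> {z \<in> IS n. dom z \<subseteq> dom (x ;; a)}"
      using IS_pcomp[OF xa s(1)] by (auto simp: pcomp_def map_comp_def split: option.splits)
  next
    fix z assume "z \<in> {z \<in> IS n. dom z \<subseteq> dom (x ;; a)}"
    then show "z \<in> {sand a x s | s. s \<in> IS n}"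
      using exists_right[OF xa, of z] by (auto simp: sand_def)
  qed
  then show ?thesis by (simp add: right_ideal1_def)
qed

lemma left_ideal_char:
  assumes a: "a \<in> IS n" and x: "x \<in> IS n"
  shows "left_ideal1 n a x = {z \<in> IS n. ran z \<subseteq> ran (a ;; x)} \<union> {x}"
proof -
  have ax: "a ;; x \<in> IS n" using IS_pcomp[OF a x] .
  have "{sand a s x | s. s \<in> IS n} = {z \<in> IS n. ran z \<subseteq> ran (a ;; x)}"
  proof (intro equalityI subsetI)
    fix z assume "z \<in> {sand a s x | s. s \<in> IS n}"
    then obtain s where s: "s \<in> IS n" "z = s ;; (a ;; x)"
      by (auto simp: sand_def pcomp_def mc_assoc)
    then show "z \<in> {z \<in> IS n. ran z \<subseteq> ran (a ;; x)}"
      using IS_pcomp[OF s(1) ax] ran_mc[of "a ;; x" s] by (auto simp: pcomp_def)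
  next
    fix z assume "z \<in> {z \<in> IS n. ran z \<subseteq> ran (a ;; x)}"
    then obtain s where "s \<in> IS n" "z = s ;; (a ;; x)"
      using exists_left[OF ax, of z] by auto
    then show "z \<in> {sand a s x | s. s \<in> IS n}"
      by (auto simp: sand_def pcomp_def mc_assoc)
  qed
  then show ?thesis by (simp add: left_ideal1_def)
qed

lemma dom_xa_sub: "dom (x ;; a) \<subseteq> dom x"
  by (auto simp: pcomp_def map_comp_def split: option.splits)

lemma dom_xa_eq: "dom (x ;; a) = dom x \<longleftrightarrow> ran x \<subseteq> dom a"
  by (auto simp: pcomp_def map_comp_def ran_def dom_def split: option.splits)

lemma ran_ax_sub: "ran (a ;; x) \<subseteq> ran x"
  by (auto simp: pcomp_def map_comp_def ran_def split: option.splits)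

lemma ran_ax_eq:
  assumes inj: "inj_on x (dom x)"
  shows "ran (a ;; x) = ran x \<longleftrightarrow> dom x \<subseteq> ran a"
proof
  assume "dom x \<subseteq> ran a"
  then show "ran (a ;; x) = ran x"
  proof (intro equalityI ran_ax_sub subsetI)
    fix v assume "v \<in> ran x"
    then obtain i where i: "x i = Some v" by (auto simp: ran_def)
    then have "i \<in> ran a" using \<open>dom x \<subseteq> ran a\<close> by auto
    then obtain k where k: "a k = Some i" by (auto simp: ran_def)
    have "(a ;; x) k = Some v" using i k by (simp add: pcomp_def)
    then show "v \<in> ran (a ;; x)" by (auto simp: ran_def)
  qed
next
  assume e: "ran (a ;; x) = ran x"
  show "dom x \<subseteq> ran a"
  proof
    fix i assume "i \<in> dom x"
    then obtain v where v: "x i = Some v" by auto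
    then have "v \<in> ran (a ;; x)" using e by (auto simp: ran_def)
    then obtain k u where "a k = Some u" "x u = Some v"
      by (auto simp: pcomp_def map_comp_def ran_def split: option.splits)
    moreover have "u = i" using inj v \<open>x u = Some v\<close> by (metis domI inj_on_def)
    ultimately show "i \<in> ran a" by (auto simp: ran_def)
  qed
qed

lemma GreenR_char:
  assumes a: "a \<in> IS n" and x: "x \<in> IS n" and y: "y \<in> IS n"
  shows "GreenR n a x y \<longleftrightarrow> x = y \<or> (ran x \<subseteq> dom a \<and> ran y \<subseteq> dom a \<and> dom x = dom y)"
proof
  assume g: "GreenR n a x y"
  show "x = y \<or> (ran x \<subseteq> dom a \<and> ran y \<subseteq> dom a \<and> dom x = dom y)"
  proof (cases "x = y")
    case False
    have e: "{z \<in> IS n. dom z \<subseteq> dom (x ;; a)} \<union> {x} = {z \<in> IS n. dom z \<subseteq> dom (y ;; a)} \<union> {y}"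
      using g right_ideal_char[OF a x] right_ideal_char[OF a y] by (simp add: GreenR_def)
    have "y \<in> {z \<in> IS n. dom z \<subseteq> dom (x ;; a)} \<union> {x}" using e by blast
    then have 1: "dom y \<subseteq> dom (x ;; a)" using False by auto
    have "x \<in> {z \<in> IS n. dom z \<subseteq> dom (y ;; a)} \<union> {y}" using e by blast
    then have 2: "dom x \<subseteq> dom (y ;; a)" using False by auto
    have "dom (x ;; a) = dom x" "dom (y ;; a) = dom y" "dom x = dom y"
      using 1 2 dom_xa_sub[of x a] dom_xa_sub[of y a] by blast+
    then show ?thesis using dom_xa_eq[of x a] dom_xa_eq[of y a] by simp
  qed simp
next
  assume h: "x = y \<or> (ran x \<subseteq> dom a \<and> ran y \<subseteq> dom a \<and> dom x = dom y)"
  show "GreenR n a x y"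
  proof (cases "x = y")
    case False
    then have h: "ran x \<subseteq> dom a" "ran y \<subseteq> dom a" "dom x = dom y" using h by auto
    then have d: "dom (x ;; a) = dom x" "dom (y ;; a) = dom y" using dom_xa_eq by blast+
    let ?A = "{z \<in> IS n. dom z \<subseteq> dom (x ;; a)}"
    have eqA: "{z \<in> IS n. dom z \<subseteq> dom (y ;; a)} = ?A" using d h(3) by simp
    have "x \<in> ?A" "y \<in> ?A" using d h(3) x y by simp_all
    then have "?A \<union> {x} = ?A" "?A \<union> {y} = ?A" by blast+
    then show ?thesis
      unfolding GreenR_def right_ideal_char[OF a x] right_ideal_char[OF a y] eqA by simp
  qed (simp add: GreenR_def)
qed

lemma GreenL_char:
  assumes a: "a \<in> IS n" and x: "x \<in> IS n" and y: "y \<in> IS n"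
  shows "GreenL n a x y \<longleftrightarrow> x = y \<or> (dom x \<subseteq> ran a \<and> dom y \<subseteq> ran a \<and> ran x = ran y)"
proof -
  have ix: "inj_on x (dom x)" and iy: "inj_on y (dom y)" using x y by (auto simp: IS_def)
  show ?thesis
  proof
    assume g: "GreenL n a x y"
    show "x = y \<or> (dom x \<subseteq> ran a \<and> dom y \<subseteq> ran a \<and> ran x = ran y)"
    proof (cases "x = y")
      case False
      have e: "{z \<in> IS n. ran z \<subseteq> ran (a ;; x)} \<union> {x} = {z \<in> IS n. ran z \<subseteq> ran (a ;; y)} \<union> {y}"
        using g left_ideal_char[OF a x] left_ideal_char[OF a y] by (simp add: GreenL_def)
      have "y \<in> {z \<in> IS n. ran z \<subseteq> ran (a ;; x)} \<union> {x}" using e by blast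
      then have 1: "ran y \<subseteq> ran (a ;; x)" using False by auto
      have "x \<in> {z \<in> IS n. ran z \<subseteq> ran (a ;; y)} \<union> {y}" using e by blast
      then have 2: "ran x \<subseteq> ran (a ;; y)" using False by auto
      have "ran (a ;; x) = ran x" "ran (a ;; y) = ran y" "ran x = ran y"
        using 1 2 ran_ax_sub[of a x] ran_ax_sub[of a y] by blast+
      then show ?thesis using ran_ax_eq[OF ix, of a] ran_ax_eq[OF iy, of a] by simp
    qed simp
  next
    assume h: "x = y \<or> (dom x \<subseteq> ran a \<and> dom y \<subseteq> ran a \<and> ran x = ran y)"
    show "GreenL n a x y"
    proof (cases "x = y")
      case False
      then have h: "dom x \<subseteq> ran a" "dom y \<subseteq> ran a" "ran x = ran y" using h by auto
      then have d: "ran (a ;; x) = ran x" "ran (a ;; y) = ran y"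
        using ran_ax_eq[OF ix] ran_ax_eq[OF iy] by blast+
      let ?A = "{z \<in> IS n. ran z \<subseteq> ran (a ;; x)}"
      have eqA: "{z \<in> IS n. ran z \<subseteq> ran (a ;; y)} = ?A" using d h(3) by simp
      have "x \<in> ?A" "y \<in> ?A" using d h(3) x y by simp_all
      then have "?A \<union> {x} = ?A" "?A \<union> {y} = ?A" by blast+
      then show ?thesis
        unfolding GreenL_def left_ideal_char[OF a x] left_ideal_char[OF a y] eqA by simp
    qed (simp add: GreenL_def)
  qed
qed

theorem theorem4:
  fixes n :: nat and a x :: "nat \<rightharpoonup> nat"
  assumes "n \<ge> 1" and "a \<in> IS n" and "x \<in> IS n"
  shows "Hclass n a x =
           (if ran x \<subseteq> dom a \<and> dom x \<subseteq> ran a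
            then {y \<in> IS n. dom y = dom x \<and> ran y = ran x}
            else {x})"
proof (rule set_eqI)
  fix y
  show "y \<in> Hclass n a x \<longleftrightarrow> y \<in> (if ran x \<subseteq> dom a \<and> dom x \<subseteq> ran a
            then {y \<in> IS n. dom y = dom x \<and> ran y = ran x} else {x})"
  proof (cases "y \<in> IS n")
    case True
    have L: "GreenL n a x y \<longleftrightarrow> x = y \<or> (dom x \<subseteq> ran a \<and> dom y \<subseteq> ran a \<and> ran x = ran y)"
      by (rule GreenL_char[OF assms(2) assms(3) True])
    have R: "GreenR n a x y \<longleftrightarrow> x = y \<or> (ran x \<subseteq> dom a \<and> ran y \<subseteq> dom a \<and> dom x = dom y)"
      by (rule GreenR_char[OF assms(2) assms(3) True])
    have H: "y \<in> Hclass n a x \<longleftrightarrow> GreenL n a x y \<and> GreenR n a x y"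
      using True by (simp add: Hclass_def GreenH_def)
    show ?thesis
    proof (cases "ran x \<subseteq> dom a \<and> dom x \<subseteq> ran a")
      case c: True
      have "GreenL n a x y \<and> GreenR n a x y \<longleftrightarrow> dom y = dom x \<and> ran y = ran x"
      proof
        assume "dom y = dom x \<and> ran y = ran x"
        then show "GreenL n a x y \<and> GreenR n a x y" using L R c by simp
      next
        assume "GreenL n a x y \<and> GreenR n a x y"
        then show "dom y = dom x \<and> ran y = ran x" using L R by auto
      qed
      then show ?thesis using H c True by simp
    next
      case c: False
      have "GreenL n a x y \<and> GreenR n a x y \<longleftrightarrow> y = x"
        using L R c by auto
      then show ?thesis using H c by (simp only: if_False singleton_iff eq_commute[of x y])
    qed
  next
    case False
    then show ?thesis using assms(3) by (auto simp: Hclass_def)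
  qed
qed

end
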